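(* In a minimally non-perfectly divisible graph $G$, every vertex belongs to a clique of size $\omega(G)$.
   Context: All graphs are finite and simple. For $S\subseteq V(G)$, $G[S]$ is the subgraph induced by $S$. $\omega(G)$ is the number of vertices in a largest clique of $G$ and $\chi(G)$ the chromatic number. A graph $G$ is perfect if $\chi(H)=\omega(H)$ for every induced subgraph $H$ of $G$. A partition $(A,B)$ of $V(G)$ is good if $G[A]$ is perfect and $\omega(G[B])<\omega(G)$. A graph $G$ is perfectly divisible if every induced subgraph $H$ of $G$ with at least one edge admits a good partition (of $V(H)$). A graph is minimally non-perfectly divisible if it is not perfectly divisible but each of its proper induced subgraphs is perfectly divisible. *)

theory Defs
  imports Main
begin

text \<open>A finite simple graph is given by a finite vertex set V and a symmetric,
irreflexive adjacency relation E (only its restriction to V matters).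
The induced subgraph on S \<subseteq> V is (S, E).\<close>

definition simple_graph :: "'a set \<Rightarrow> ('a \<Rightarrow> 'a \<Rightarrow> bool) \<Rightarrow> bool" where
  "simple_graph V E \<longleftrightarrow> finite V \<and> (\<forall>x\<in>V. \<forall>y\<in>V. E x y \<longleftrightarrow> E y x) \<and> (\<forall>x\<in>V. \<not> E x x)"

definition clique :: "'a set \<Rightarrow> ('a \<Rightarrow> 'a \<Rightarrow> bool) \<Rightarrow> 'a set \<Rightarrow> bool" where
  "clique V E K \<longleftrightarrow> K \<subseteq> V \<and> (\<forall>x\<in>K. \<forall>y\<in>K. x \<noteq> y \<longrightarrow> E x y)"

definition clique_number :: "'a set \<Rightarrow> ('a \<Rightarrow> 'a \<Rightarrow> bool) \<Rightarrow> nat" where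
  "clique_number V E = Max {card K | K. clique V E K}"

definition colourable :: "'a set \<Rightarrow> ('a \<Rightarrow> 'a \<Rightarrow> bool) \<Rightarrow> nat \<Rightarrow> bool" where
  "colourable V E k \<longleftrightarrow> (\<exists>c :: 'a \<Rightarrow> nat. (\<forall>x\<in>V. c x < k) \<and>
       (\<forall>x\<in>V. \<forall>y\<in>V. E x y \<longrightarrow> c x \<noteq> c y))"

definition chromatic_number :: "'a set \<Rightarrow> ('a \<Rightarrow> 'a \<Rightarrow> bool) \<Rightarrow> nat" where
  "chromatic_number V E = (LEAST k. colourable V E k)"

definition perfect :: "'a set \<Rightarrow> ('a \<Rightarrow> 'a \<Rightarrow> bool) \<Rightarrow> bool" where
  "perfect V E \<longleftrightarrow> (\<forall>S\<subseteq>V. chromatic_number S E = clique_number S E)"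

definition good_partition :: "'a set \<Rightarrow> ('a \<Rightarrow> 'a \<Rightarrow> bool) \<Rightarrow> 'a set \<Rightarrow> 'a set \<Rightarrow> bool" where
  "good_partition V E A B \<longleftrightarrow> A \<union> B = V \<and> A \<inter> B = {} \<and>
     perfect A E \<and> clique_number B E < clique_number V E"

definition has_edge :: "'a set \<Rightarrow> ('a \<Rightarrow> 'a \<Rightarrow> bool) \<Rightarrow> bool" where
  "has_edge V E \<longleftrightarrow> (\<exists>x\<in>V. \<exists>y\<in>V. E x y)"

definition perfectly_divisible :: "'a set \<Rightarrow> ('a \<Rightarrow> 'a \<Rightarrow> bool) \<Rightarrow> bool" where
  "perfectly_divisible V E \<longleftrightarrow>
     (\<forall>S\<subseteq>V. has_edge S E \<longrightarrow> (\<exists>A B. good_partition S E A B))"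

definition minimally_non_pd :: "'a set \<Rightarrow> ('a \<Rightarrow> 'a \<Rightarrow> bool) \<Rightarrow> bool" where
  "minimally_non_pd V E \<longleftrightarrow> \<not> perfectly_divisible V E \<and>
     (\<forall>S. S \<subset> V \<longrightarrow> perfectly_divisible S E)"

end

theory Submission
  imports Defs
begin

lemma cn_fin: "finite V \<Longrightarrow> finite {card K | K. clique V E K}"
proof -
  assume f: "finite V"
  have "{card K | K. clique V E K} \<subseteq> card ` Pow V" by (auto simp: clique_def)
  then show ?thesis using f finite_subset by blast
qed

lemma cn_ne: "{card K | K. clique V E K} \<noteq> {}"
  by (auto simp: clique_def)

lemma cn_ge: "finite V \<Longrightarrow> clique V E K \<Longrightarrow> card K \<le> clique_number V E"
  unfolding clique_number_def using cn_fin by (intro Max_ge) auto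

lemma cn_ex: "finite V \<Longrightarrow> \<exists>K. clique V E K \<and> card K = clique_number V E"
proof -
  assume f: "finite V"
  have "clique_number V E \<in> {card K | K. clique V E K}"
    unfolding clique_number_def using Max_in[OF cn_fin[OF f] cn_ne] by blast
  then show ?thesis by auto
qed

lemma clique_mono: "clique S E K \<Longrightarrow> S \<subseteq> T \<Longrightarrow> clique T E K"
  by (auto simp: clique_def)

theorem lemma2:
  fixes V :: "'a set" and E :: "'a \<Rightarrow> 'a \<Rightarrow> bool"
  assumes "simple_graph V E"
    and "minimally_non_pd V E"
    and "v \<in> V"
  shows "\<exists>K. clique V E K \<and> v \<in> K \<and> card K = clique_number V E"
proof (rule ccontr)
  assume nv: "\<not> ?thesis"
  have fin: "finite V" and irr: "\<forall>x\<in>V. \<not> E x x" using assms(1) by (auto simp: simple_graph_def)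
  have npd: "\<not> perfectly_divisible V E" and minpd: "\<And>S. S \<subset> V \<Longrightarrow> perfectly_divisible S E"
    using assms(2) by (auto simp: minimally_non_pd_def)
  obtain S where S: "S \<subseteq> V" "has_edge S E" "\<not> (\<exists>A B. good_partition S E A B)"
    using npd by (auto simp: perfectly_divisible_def)
  have SV: "S = V"
  proof (rule ccontr)
    assume "S \<noteq> V"
    then have "S \<subset> V" using S(1) by auto
    then have "perfectly_divisible S E" by (rule minpd)
    then show False using S by (auto simp: perfectly_divisible_def)
  qed
  have ngp: "\<And>A B. \<not> good_partition V E A B" using S(3) SV by auto
  define W where "W = V - {v}"
  have WV: "W \<subset> V" using assms(3) W_def by auto
  have finW: "finite W" using fin W_def by auto
  obtain K0 where K0: "clique V E K0" "card K0 = clique_number V E" using cn_ex[OF fin] by blast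
  have vK0: "v \<notin> K0" using nv K0 by blast
  have K0W: "clique W E K0" using K0(1) vK0 by (auto simp: clique_def W_def)
  have cnW: "clique_number W E = clique_number V E"
  proof (rule antisym)
    obtain K where "clique W E K" "card K = clique_number W E" using cn_ex[OF finW] by blast
    then show "clique_number W E \<le> clique_number V E"
      using cn_ge[OF fin] clique_mono WV by (metis psubset_imp_subset)
  next
    show "clique_number V E \<le> clique_number W E" using cn_ge[OF finW K0W] K0(2) by simp
  qed
  obtain x y where xy: "x \<in> V" "y \<in> V" "E x y" using S(2) SV by (auto simp: has_edge_def)
  have "x \<noteq> y" using xy irr by auto
  then have "clique V E {x,y}" using xy assms(1) by (auto simp: clique_def simple_graph_def)
  then have "2 \<le> clique_number V E" using cn_ge[OF fin] \<open>x \<noteq> y\<close> by fastforce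
  then have "2 \<le> card K0" using K0 by simp
  then obtain a b where ab: "a \<in> K0" "b \<in> K0" "a \<noteq> b"
    by (metis One_nat_def card.infinite card_le_Suc0_iff_eq not_less_eq_eq numeral_2_eq_2 zero_le)
  have "has_edge W E" using ab K0W unfolding has_edge_def clique_def by blast
  then obtain A B where AB: "good_partition W E A B"
    using minpd[OF WV] by (auto simp: perfectly_divisible_def)
  have gp: "good_partition V E A (B \<union> {v})"
    unfolding good_partition_def
  proof (intro conjI)
    show "A \<union> (B \<union> {v}) = V" using AB assms(3) by (auto simp: good_partition_def W_def)
    show "A \<inter> (B \<union> {v}) = {}" using AB by (auto simp: good_partition_def W_def)
    show "perfect A E" using AB by (auto simp: good_partition_def)
    have BW: "B \<subseteq> W" using AB by (auto simp: good_partition_def)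
    have finB: "finite (B \<union> {v})" using BW finW finite_subset by blast
    obtain K where K: "clique (B \<union> {v}) E K" "card K = clique_number (B \<union> {v}) E"
      using cn_ex[OF finB] by blast
    have KV: "clique V E K" using K(1) BW WV assms(3) by (auto simp: clique_def)
    show "clique_number (B \<union> {v}) E < clique_number V E"
    proof (cases "v \<in> K")
      case True
      then show ?thesis using K KV nv cn_ge[OF fin KV] by fastforce
    next
      case False
      then have "clique B E K" using K(1) by (auto simp: clique_def)
      then have "card K \<le> clique_number B E" using cn_ge BW finW finite_subset by blast
      then show ?thesis using K(2) AB cnW by (auto simp: good_partition_def)
    qed
  qed
  then show False using ngp by blast
qed

end
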